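(* Let $G$ be a finitely generated group that admits a surjective homomorphism onto $\mathbb{Z}^2$. Then for every finite symmetric generating set $X$ of $G$, the geodesic growth of $G$ with respect to $X$ is exponential: there exists $b>1$ with $\Gamma_{G,X}(n)\ge b^n$ for all $n\in\mathbb{N}$.
   Context: Generating sets may contain repeated elements (formally, a finite symmetric alphabet with an epimorphism from the free monoid onto $G$). A word over $X$ is a geodesic if its length equals the word length of the element it represents; $\Gamma_{G,X}(n)$ is the number of geodesic words over $X$ of length at most $n$. *)

theory Defs
  imports "HOL-Algebra.Algebra"
begin

text \<open>A (multi-)generating alphabet: a finite set of letters A with an evaluation
map e into the group. Words are lists of letters; evaluation is the monoid
homomorphism from the free monoid on A to G.\<close>

definition word_eval :: "('a, 'm) monoid_scheme \<Rightarrow> ('x \<Rightarrow> 'a) \<Rightarrow> 'x list \<Rightarrow> 'a" where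
  "word_eval G e w = foldr (\<lambda>x g. e x \<otimes>\<^bsub>G\<^esub> g) w \<one>\<^bsub>G\<^esub>"

definition fin_sym_gen_alphabet :: "('a, 'm) monoid_scheme \<Rightarrow> 'x set \<Rightarrow> ('x \<Rightarrow> 'a) \<Rightarrow> bool" where
  "fin_sym_gen_alphabet G A e \<longleftrightarrow>
     finite A \<and> e ` A \<subseteq> carrier G \<and>
     (\<forall>x\<in>A. \<exists>y\<in>A. e y = m_inv G (e x)) \<and>
     (\<forall>g\<in>carrier G. \<exists>w\<in>lists A. word_eval G e w = g)"

definition word_length :: "('a, 'm) monoid_scheme \<Rightarrow> 'x set \<Rightarrow> ('x \<Rightarrow> 'a) \<Rightarrow> 'a \<Rightarrow> nat" where
  "word_length G A e g = (LEAST n. \<exists>w\<in>lists A. length w = n \<and> word_eval G e w = g)"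

definition geodesic :: "('a, 'm) monoid_scheme \<Rightarrow> 'x set \<Rightarrow> ('x \<Rightarrow> 'a) \<Rightarrow> 'x list \<Rightarrow> bool" where
  "geodesic G A e w \<longleftrightarrow> w \<in> lists A \<and> length w = word_length G A e (word_eval G e w)"

definition geodesic_growth :: "('a, 'm) monoid_scheme \<Rightarrow> 'x set \<Rightarrow> ('x \<Rightarrow> 'a) \<Rightarrow> nat \<Rightarrow> nat" where
  "geodesic_growth G A e n = card {w. geodesic G A e w \<and> length w \<le> n}"

definition finitely_generated_group :: "('a, 'm) monoid_scheme \<Rightarrow> bool" where
  "finitely_generated_group G \<longleftrightarrow>
     (\<exists>S. finite S \<and> S \<subseteq> carrier G \<and> generate G S = carrier G)"

definition Z2_group :: "(int \<times> int) monoid" where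
  "Z2_group = integer_group \<times>\<times> integer_group"

end

theory Submission
  imports Defs
begin

lemma L1:
  fixes P :: "(real \<times> real) set"
  assumes fin: "finite P" and pP: "p \<in> P"
    and mx: "\<forall>r\<in>P. fst r \<le> fst p"
    and my: "\<forall>r\<in>P. fst r = fst p \<longrightarrow> snd r \<le> snd p"
    and qP: "q \<in> P" and qy: "snd q > snd p"
  shows "\<exists>t. \<exists>q0\<in>P. q0 \<noteq> p \<and> fst q0 + t * snd q0 = fst p + t * snd p \<and>
            (\<forall>r\<in>P. fst r + t * snd r \<le> fst p + t * snd p)"
proof -
  define S where "S = {r\<in>P. snd r > snd p}"
  define g where "g r = (fst p - fst r) / (snd r - snd p)" for r
  have fS: "finite S" using fin S_def by auto
  have neS: "S \<noteq> {}" using qP qy unfolding S_def by blast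
  define t where "t = Min (g ` S)"
  have "t \<in> g ` S" unfolding t_def using fS neS by (intro Min_in) auto
  then obtain q0 where q0S: "q0 \<in> S" and tq0: "t = g q0" by auto
  have tle: "\<And>r. r \<in> S \<Longrightarrow> t \<le> g r" unfolding t_def using fS by (intro Min_le) auto
  have xlt: "\<And>r. r \<in> S \<Longrightarrow> fst r < fst p"
  proof -
    fix r assume "r \<in> S"
    hence "r \<in> P" "snd r > snd p" by (auto simp: S_def)
    with mx my show "fst r < fst p" by force
  qed
  have tpos: "t > 0" using xlt[OF q0S] q0S tq0 by (auto simp: S_def g_def)
  show ?thesis
  proof (intro exI bexI conjI ballI)
    show "q0 \<in> P" "q0 \<noteq> p" using q0S by (auto simp: S_def)
    have d: "snd q0 - snd p > 0" using q0S by (auto simp: S_def)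
    have "t * (snd q0 - snd p) = fst p - fst q0" using tq0 d by (simp add: g_def)
    thus "fst q0 + t * snd q0 = fst p + t * snd p" by (simp add: algebra_simps)
  next
    fix r assume rP: "r \<in> P"
    show "fst r + t * snd r \<le> fst p + t * snd p"
    proof (cases "r \<in> S")
      case True
      have d: "snd r - snd p > 0" using True by (auto simp: S_def)
      have "t * (snd r - snd p) \<le> g r * (snd r - snd p)"
        using tle[OF True] d by (intro mult_right_mono) auto
      also have "\<dots> = fst p - fst r" using d by (simp add: g_def)
      finally show ?thesis by (simp add: algebra_simps)
    next
      case False
      hence "snd r \<le> snd p" using rP by (auto simp: S_def)
      hence "t * snd r \<le> t * snd p" using tpos by simp
      moreover have "fst r \<le> fst p" using mx rP by blast
      ultimately show ?thesis by linarith
    qed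
  qed
qed

lemma geo:
  fixes P :: "(real \<times> real) set"
  assumes fin: "finite P"
    and sym: "\<forall>r\<in>P. (- fst r, - snd r) \<in> P"
    and nd: "\<forall>\<alpha> \<beta>. (\<forall>r\<in>P. \<alpha> * fst r + \<beta> * snd r = 0) \<longrightarrow> \<alpha> = 0 \<and> \<beta> = 0"
  shows "\<exists>\<beta> p q. p \<in> P \<and> q \<in> P \<and> p \<noteq> q \<and> fst p + \<beta> * snd p = fst q + \<beta> * snd q
          \<and> (\<forall>r\<in>P. fst r + \<beta> * snd r \<le> fst p + \<beta> * snd p) \<and> fst p + \<beta> * snd p > 0"
proof -
  have neP: "P \<noteq> {}"
  proof
    assume "P = {}"
    with nd have "(1::real) = 0" by auto
    thus False by simp
  qed
  define mx where "mx = Max (fst ` P)"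
  define P1 where "P1 = {r\<in>P. fst r = mx}"
  have mxin: "mx \<in> fst ` P" unfolding mx_def using fin neP by (intro Max_in) auto
  have mxge: "\<And>r. r \<in> P \<Longrightarrow> fst r \<le> mx" unfolding mx_def using fin by (intro Max_ge) auto
  have fP1: "finite P1" "P1 \<noteq> {}" using fin mxin by (auto simp: P1_def)
  define my where "my = Max (snd ` P1)"
  have myin: "my \<in> snd ` P1" unfolding my_def using fP1 by (intro Max_in) auto
  have myge: "\<And>r. r \<in> P1 \<Longrightarrow> snd r \<le> my" unfolding my_def using fP1 by (intro Max_ge) auto
  define p where "p = (mx, my)"
  have pP: "p \<in> P" using myin by (auto simp: P1_def p_def)
  have A: "\<forall>r\<in>P. fst r \<le> fst p" using mxge by (simp add: p_def)
  have B: "\<forall>r\<in>P. fst r = fst p \<longrightarrow> snd r \<le> snd p" using myge by (auto simp: p_def P1_def)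
  have main: "\<exists>\<beta> q. q \<in> P \<and> p \<noteq> q \<and> fst p + \<beta> * snd p = fst q + \<beta> * snd q
          \<and> (\<forall>r\<in>P. fst r + \<beta> * snd r \<le> fst p + \<beta> * snd p)"
  proof (cases "\<exists>q\<in>P. q \<noteq> p \<and> fst q = fst p")
    case True
    then obtain q where "q\<in>P" "q \<noteq> p" "fst q = fst p" by auto
    thus ?thesis using A by (intro exI[of _ 0] exI[of _ q]) auto
  next
    case C1: False
    show ?thesis
    proof (cases "\<exists>q\<in>P. snd q > snd p")
      case True
      then obtain q where "q\<in>P" "snd q > snd p" by auto
      from L1[OF fin pP A B this] show ?thesis by metis
    next
      case C2: False
      show ?thesis
      proof (cases "\<exists>q\<in>P. snd q < snd p")
        case True
        then obtain q where qP: "q\<in>P" "snd q < snd p" by auto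
        define h where "h r = (fst r, - snd r)" for r :: "real \<times> real"
        have hh: "h (h r) = r" for r by (simp add: h_def)
        have "\<exists>t. \<exists>q0\<in>h ` P. q0 \<noteq> h p \<and> fst q0 + t * snd q0 = fst (h p) + t * snd (h p) \<and>
            (\<forall>r\<in>h ` P. fst r + t * snd r \<le> fst (h p) + t * snd (h p))"
        proof (rule L1[of _ _ "h q"])
          show "finite (h ` P)" using fin by simp
          show "h p \<in> h ` P" "h q \<in> h ` P" using pP qP by auto
          show "\<forall>r\<in>h ` P. fst r \<le> fst (h p)" using A by (auto simp: h_def)
          show "\<forall>r\<in>h ` P. fst r = fst (h p) \<longrightarrow> snd r \<le> snd (h p)"
            using C1 by (auto simp: h_def)
          show "snd (h p) < snd (h q)" using qP by (simp add: h_def)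
        qed
        then obtain t q0 where q0: "q0 \<in> h ` P" "q0 \<noteq> h p"
          "fst q0 + t * snd q0 = fst (h p) + t * snd (h p)"
          "\<forall>r\<in>h ` P. fst r + t * snd r \<le> fst (h p) + t * snd (h p)" by blast
        show ?thesis
        proof (intro exI[of _ "-t"] exI[of _ "h q0"] conjI ballI)
          show "h q0 \<in> P" using q0(1) hh by auto
          show "p \<noteq> h q0" using q0(2) hh by metis
          show "fst p + - t * snd p = fst (h q0) + - t * snd (h q0)" using q0(3) by (simp add: h_def)
          fix r assume "r \<in> P"
          hence "h r \<in> h ` P" by simp
          from q0(4)[rule_format, OF this] show "fst r + - t * snd r \<le> fst p + - t * snd p"
            by (simp add: h_def)
        qed
      next
        case C3: False
        have ally: "\<forall>r\<in>P. snd r = snd p" using C2 C3 by force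
        have "(- fst p, - snd p) \<in> P" using sym pP by auto
        hence "snd p = 0" using ally by force
        hence "\<forall>r\<in>P. 0 * fst r + 1 * snd r = 0" using ally by simp
        with nd have "(1::real) = 0" by blast
        hence False by simp
        thus ?thesis ..
      qed
    qed
  qed
  then obtain \<beta> q where q: "q \<in> P" "p \<noteq> q" "fst p + \<beta> * snd p = fst q + \<beta> * snd q"
    and mxr: "\<forall>r\<in>P. fst r + \<beta> * snd r \<le> fst p + \<beta> * snd p" by blast
  have pos: "fst p + \<beta> * snd p > 0"
  proof (rule ccontr)
    assume "\<not> ?thesis"
    hence np: "fst p + \<beta> * snd p \<le> 0" by simp
    have "\<forall>r\<in>P. 1 * fst r + \<beta> * snd r = 0"
    proof
      fix r assume rP: "r \<in> P"
      have "(- fst r, - snd r) \<in> P" using sym rP by auto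
      from mxr[rule_format, OF this] mxr[rule_format, OF rP] np
      show "1 * fst r + \<beta> * snd r = 0" by simp
    qed
    with nd have "(1::real) = 0" by blast
    thus False by simp
  qed
  show ?thesis using pP q mxr pos by blast
qed

definition lin :: "real \<Rightarrow> real \<Rightarrow> int \<times> int \<Rightarrow> real" where
  "lin a b z = a * real_of_int (fst z) + b * real_of_int (snd z)"

lemma Z2_group_grp: "group Z2_group"
  unfolding Z2_group_def by (intro DirProd_group) simp_all

lemma lin_mult: "lin a b (x \<otimes>\<^bsub>Z2_group\<^esub> y) = lin a b x + lin a b y"
  by (simp add: Z2_group_def mult_DirProd' lin_def algebra_simps)

lemma word_lin:
  assumes G: "group G" and h: "\<phi> \<in> hom G Z2_group" and eA: "e ` A \<subseteq> carrier G"
  shows "w \<in> lists A \<Longrightarrow> word_eval G e w \<in> carrier G \<and>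
     lin a b (\<phi> (word_eval G e w)) = sum_list (map (\<lambda>x. lin a b (\<phi> (e x))) w)"
proof (induction w)
  case Nil
  have "\<phi> \<one>\<^bsub>G\<^esub> = \<one>\<^bsub>Z2_group\<^esub>" using hom_one[OF h G Z2_group_grp] .
  then show ?case using G by (simp add: word_eval_def Z2_group_def lin_def group.is_monoid monoid.one_closed)
next
  case (Cons x w)
  have we: "word_eval G e (x # w) = e x \<otimes>\<^bsub>G\<^esub> word_eval G e w" by (simp add: word_eval_def)
  have ex: "e x \<in> carrier G" using Cons.prems eA by auto
  from Cons have IH: "word_eval G e w \<in> carrier G"
     "lin a b (\<phi> (word_eval G e w)) = sum_list (map (\<lambda>x. lin a b (\<phi> (e x))) w)" by auto
  show ?case unfolding we using ex IH hom_mult[OF h ex IH(1)] lin_mult G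
    by (simp add: group.is_monoid monoid.m_closed)
qed

theorem corollary3p2:
  fixes G :: "('a, 'm) monoid_scheme"
  assumes "group G"
    and "finitely_generated_group G"
    and "\<exists>\<phi>. \<phi> \<in> epi G Z2_group"
  shows "\<forall>(A :: 'x set) (e :: 'x \<Rightarrow> 'a). fin_sym_gen_alphabet G A e \<longrightarrow>
           (\<exists>b::real. b > 1 \<and> (\<forall>n. real (geodesic_growth G A e n) \<ge> b ^ n))"
proof (intro allI impI)
  fix A :: "'x set" and e :: "'x \<Rightarrow> 'a"
  assume fs: "fin_sym_gen_alphabet G A e"
  have finA: "finite A" and eA: "e ` A \<subseteq> carrier G"
    and symA: "\<forall>x\<in>A. \<exists>y\<in>A. e y = inv\<^bsub>G\<^esub> (e x)"
    and genA: "\<forall>g\<in>carrier G. \<exists>w\<in>lists A. word_eval G e w = g"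
    using fs unfolding fin_sym_gen_alphabet_def by auto
  obtain \<phi> where epi: "\<phi> \<in> epi G Z2_group" using assms(3) by blast
  have h: "\<phi> \<in> hom G Z2_group" and surj: "\<phi> ` carrier G = carrier Z2_group"
    using epi by (auto simp: epi_def)
  note G = assms(1)
  define pt where "pt x = (real_of_int (fst (\<phi> (e x))), real_of_int (snd (\<phi> (e x))))" for x
  define P where "P = pt ` A"
  have linpt: "\<And>a b x. lin a b (\<phi> (e x)) = a * fst (pt x) + b * snd (pt x)"
    by (simp add: lin_def pt_def)
  have finP: "finite P" using finA by (simp add: P_def)
  have symP: "\<forall>r\<in>P. (- fst r, - snd r) \<in> P"
  proof
    fix r assume "r \<in> P"
    then obtain x where x: "x \<in> A" "r = pt x" by (auto simp: P_def)
    then obtain y where y: "y \<in> A" "e y = inv\<^bsub>G\<^esub> (e x)" using symA by blast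
    have ex: "e x \<in> carrier G" using x eA by auto
    have "word_eval G e [y, x] = e y \<otimes>\<^bsub>G\<^esub> (e x \<otimes>\<^bsub>G\<^esub> \<one>\<^bsub>G\<^esub>)" by (simp add: word_eval_def)
    also have "\<dots> = \<one>\<^bsub>G\<^esub>" using y ex G by (simp add: group.l_inv group.is_monoid monoid.r_one)
    finally have w1: "word_eval G e [y, x] = \<one>\<^bsub>G\<^esub>" .
    have "\<phi> \<one>\<^bsub>G\<^esub> = \<one>\<^bsub>Z2_group\<^esub>" using hom_one[OF h G Z2_group_grp] .
    hence l0: "\<And>a b. lin a b (\<phi> \<one>\<^bsub>G\<^esub>) = 0" by (simp add: Z2_group_def lin_def)
    have "[y, x] \<in> lists A" using x y by auto
    from word_lin[OF G h eA this] w1 l0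
    have "\<And>a b. lin a b (\<phi> (e y)) + lin a b (\<phi> (e x)) = 0" by simp
    from this[of 1 0] this[of 0 1] have "pt y = (- fst (pt x), - snd (pt x))"
      by (simp add: linpt prod_eq_iff)
    hence "(- fst r, - snd r) = pt y" using x by simp
    thus "(- fst r, - snd r) \<in> P" using y unfolding P_def by blast
  qed
  have ndP: "\<forall>\<alpha> \<beta>. (\<forall>r\<in>P. \<alpha> * fst r + \<beta> * snd r = 0) \<longrightarrow> \<alpha> = 0 \<and> \<beta> = 0"
  proof (intro allI impI)
    fix \<alpha> \<beta> assume z: "\<forall>r\<in>P. \<alpha> * fst r + \<beta> * snd r = 0"
    have L0: "lin \<alpha> \<beta> z = 0" for z
    proof -
      have "z \<in> carrier Z2_group" by (simp add: Z2_group_def)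
      then obtain g where g: "g \<in> carrier G" "\<phi> g = z" using surj by force
      then obtain w where w: "w \<in> lists A" "word_eval G e w = g" using genA by blast
      have "\<forall>x\<in>set w. lin \<alpha> \<beta> (\<phi> (e x)) = 0" using w z by (auto simp: linpt P_def)
      hence "sum_list (map (\<lambda>x. lin \<alpha> \<beta> (\<phi> (e x))) w) = 0"
        by (induction w) auto
      thus ?thesis using word_lin[OF G h eA w(1)] w g by simp
    qed
    from L0[of "(1,0)"] L0[of "(0,1)"] show "\<alpha> = 0 \<and> \<beta> = 0" by (simp add: lin_def)
  qed
  obtain \<beta> p q where pq: "p \<in> P" "q \<in> P" "p \<noteq> q" "fst p + \<beta> * snd p = fst q + \<beta> * snd q"
    and mxr: "\<forall>r\<in>P. fst r + \<beta> * snd r \<le> fst p + \<beta> * snd p" and pos: "fst p + \<beta> * snd p > 0"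
    using geo[OF finP symP ndP] by blast
  define M where "M = fst p + \<beta> * snd p"
  obtain a where a: "a \<in> A" "pt a = p" using pq(1) by (auto simp: P_def)
  obtain b where b: "b \<in> A" "pt b = q" using pq(2) by (auto simp: P_def)
  have ab: "a \<noteq> b" using a b pq(3) by auto
  have la: "lin 1 \<beta> (\<phi> (e a)) = M" using a by (simp add: linpt M_def)
  have lb: "lin 1 \<beta> (\<phi> (e b)) = M" using b pq(4) by (simp add: linpt M_def)
  have lx: "\<And>x. x \<in> A \<Longrightarrow> lin 1 \<beta> (\<phi> (e x)) \<le> M"
    using mxr by (auto simp: linpt M_def P_def)
  have sum_le: "sum_list (map (\<lambda>x. lin 1 \<beta> (\<phi> (e x))) u) \<le> M * length u" if "u \<in> lists A" for u
    using that
  proof (induction u)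
    case Nil then show ?case by simp
  next
    case (Cons x u) then show ?case using lx[of x] by (auto simp: algebra_simps)
  qed
  have geo_w: "geodesic G A e w" if w: "set w \<subseteq> {a, b}" for w
  proof -
    have wl: "w \<in> lists A" using w a b by auto
    have "sum_list (map (\<lambda>x. lin 1 \<beta> (\<phi> (e x))) w) = M * length w"
      using w
    proof (induction w)
      case Nil then show ?case by simp
    next
      case (Cons x u) then show ?case using la lb by (auto simp: algebra_simps)
    qed
    hence lw: "lin 1 \<beta> (\<phi> (word_eval G e w)) = M * length w" using word_lin[OF G h eA wl] by simp
    have "word_length G A e (word_eval G e w) = length w"
      unfolding word_length_def
    proof (rule Least_equality)
      show "\<exists>u\<in>lists A. length u = length w \<and> word_eval G e u = word_eval G e w" using wl by blast
    next
      fix n assume "\<exists>u\<in>lists A. length u = n \<and> word_eval G e u = word_eval G e w"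
      then obtain u where u: "u \<in> lists A" "length u = n" "word_eval G e u = word_eval G e w" by blast
      have "M * length w = lin 1 \<beta> (\<phi> (word_eval G e u))" using lw u by simp
      also have "\<dots> \<le> M * length u" using word_lin[OF G h eA u(1)] sum_le[OF u(1)] by simp
      finally have "real (length w) \<le> real (length u)" using pos M_def by simp
      thus "length w \<le> n" using u by simp
    qed
    thus ?thesis using wl by (simp add: geodesic_def)
  qed
  show "\<exists>b::real. b > 1 \<and> (\<forall>n. real (geodesic_growth G A e n) \<ge> b ^ n)"
  proof (intro exI[of _ 2] conjI allI)
    fix n
    have sub: "{xs. set xs \<subseteq> {a, b} \<and> length xs = n} \<subseteq> {w. geodesic G A e w \<and> length w \<le> n}"
      using geo_w by auto
    have fin: "finite {w. geodesic G A e w \<and> length w \<le> n}"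
      by (rule finite_subset[OF _ finite_lists_length_le[OF finA, of n]])
         (auto simp: geodesic_def)
    have "(2::nat) ^ n = card {xs. set xs \<subseteq> {a, b} \<and> length xs = n}"
      using card_lists_length_eq[of "{a,b}" n] ab by (simp add: numeral_2_eq_2)
    also have "\<dots> \<le> geodesic_growth G A e n"
      unfolding geodesic_growth_def by (rule card_mono[OF fin sub])
    finally show "real (geodesic_growth G A e n) \<ge> 2 ^ n"
      by (metis of_nat_le_iff of_nat_numeral of_nat_power)
  qed simp
qed

end
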